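(* Let $c>0$ be constant. There exist constants $b_1,b_2,b_3>0$ depending only on $c$ such that for all sufficiently large $n$, at every time $t$ with $Z^t\ge1$, conditional on $(x^t,\lambda^t)$: $\Pr[\bar A]\le e^{-b_1\lambda^t}$ and $e^{-b_2\lambda^t Z^t/n}\le\Pr[\bar B]\le e^{-b_3\lambda^t Z^t/n}$. Moreover $\Pr[f^t(x^{t+1})\le f^t(x^t)]\le \exp\!\big(-\tfrac12 c e^{-c}\lfloor\lambda^t\rceil Z^t/n\big)$.
   Context: Consider the SA-$(1,\lambda)$-EA on a dynamic monotone function: a function $f:\{0,1\}^n\to\mathbb R$ is monotone if $f(x)>f(y)$ whenever $x\ne y$ and $x_i\ge y_i$ for all $i$; $(f^t)_{t\ge0}$ is a sequence of monotone functions, $f^t$ possibly chosen adversarially depending on $x^t$. The algorithm (with constants $c>0$, $s>0$, $F>1$) maintains $x^t\in\{0,1\}^n$, real $\lambda^t\ge1$; in generation $t$ it creates $\lfloor\lambda^t\rceil$ (nearest integer) offspring $y^{t,j}$, each independently by flipping every bit of $x^t$ independently with probability $c/n$; $x^{t+1}$ is an offspring maximizing $f^t$ (ties uniformly at random); $\lambda^{t+1}=\max\{1,\lambda^t/F\}$ if $f^t(x^{t+1})>f^t(x^t)$, else $\lambda^{t+1}=F^{1/s}\lambda^t$. $Z^t$ is the number of zero-bits of $x^t$. $A$ is the event that some offspring $y^{t,j}$ flips no one-bit of $x^t$ (i.e. $\{i:x^t_i=1\}\subseteq\{i:y^{t,j}_i=1\}$); $B$ is the event that some offspring flips at least one zero-bit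 of $x^t$ (there are $j,i$ with $x^t_i=0$, $y^{t,j}_i=1$). *)

theory Defs
  imports "HOL-Probability.Probability"
begin

text \<open>Bit strings of length n are lists of booleans (True = one-bit).\<close>

primrec mutate :: "real \<Rightarrow> bool list \<Rightarrow> bool list pmf" where
  "mutate p [] = return_pmf []"
| "mutate p (b # bs) =
     bind_pmf (bernoulli_pmf p)
       (\<lambda>fl. map_pmf (\<lambda>r. (if fl then \<not> b else b) # r) (mutate p bs))"

primrec offspring :: "real \<Rightarrow> bool list \<Rightarrow> nat \<Rightarrow> bool list list pmf" where
  "offspring p x 0 = return_pmf []"
| "offspring p x (Suc k) =
     bind_pmf (mutate p x) (\<lambda>y. map_pmf (\<lambda>ys. y # ys) (offspring p x k))"

definition select_best :: "(bool list \<Rightarrow> real) \<Rightarrow> bool list list \<Rightarrow> bool list pmf" where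
  "select_best f ys = pmf_of_set {y \<in> set ys. \<forall>z \<in> set ys. f z \<le> f y}"

definition num_offspring :: "real \<Rightarrow> nat" where
  "num_offspring lam = nat (round lam)"

text \<open>Distribution of the next parent x^{t+1}, given x^t = x, lambda^t = lam, f^t = f.\<close>
definition next_parent ::
  "real \<Rightarrow> nat \<Rightarrow> (bool list \<Rightarrow> real) \<Rightarrow> bool list \<Rightarrow> real \<Rightarrow> bool list pmf" where
  "next_parent c n f x lam =
     bind_pmf (offspring (c / real n) x (num_offspring lam)) (select_best f)"

definition monotone_bitfun :: "nat \<Rightarrow> (bool list \<Rightarrow> real) \<Rightarrow> bool" where
  "monotone_bitfun n f \<longleftrightarrow>
     (\<forall>x y. length x = n \<longrightarrow> length y = n \<longrightarrow> x \<noteq> y \<longrightarrow>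
        (\<forall>i<n. y ! i \<longrightarrow> x ! i) \<longrightarrow> f x > f y)"

definition zeros :: "nat \<Rightarrow> bool list \<Rightarrow> nat" where
  "zeros n x = card {i. i < n \<and> \<not> x ! i}"

definition event_A :: "nat \<Rightarrow> bool list \<Rightarrow> bool list list set" where
  "event_A n x = {ys. \<exists>y \<in> set ys. \<forall>i<n. x ! i \<longrightarrow> y ! i}"

definition event_B :: "nat \<Rightarrow> bool list \<Rightarrow> bool list list set" where
  "event_B n x = {ys. \<exists>y \<in> set ys. \<exists>i<n. \<not> x ! i \<and> y ! i}"

end

theory Submission
  imports Defs
begin

lemma prob_bind_pmf:
  "measure_pmf.prob (bind_pmf M f) A = measure_pmf.expectation M (\<lambda>x. measure_pmf.prob (f x) A)"
proof -
  have int: "integrable (measure_pmf M) (\<lambda>x. measure_pmf.prob (f x) A)"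
    by (rule measure_pmf.integrable_const_bound[where B=1]) auto
  have "emeasure (bind_pmf M f) A = (\<integral>\<^sup>+x. ennreal (measure_pmf.prob (f x) A) \<partial>M)"
    unfolding emeasure_bind_pmf by (simp add: measure_pmf.emeasure_eq_measure)
  also have "\<dots> = ennreal (measure_pmf.expectation M (\<lambda>x. measure_pmf.prob (f x) A))"
    by (rule nn_integral_eq_integral[OF int]) auto
  finally show ?thesis
    by (simp add: measure_pmf.emeasure_eq_measure)
qed

lemma card_suc_split:
  "card {i. i < Suc n \<and> P i} = (if P 0 then 1 else 0) + card {i. i < n \<and> P (Suc i)}"
proof -
  have "{i. i < Suc n \<and> P i} = (if P 0 then {0} else {}) \<union> Suc ` {i. i < n \<and> P (Suc i)}"
    by (auto simp: less_Suc_eq_0_disj)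
  moreover have "card (Suc ` {i. i < n \<and> P (Suc i)}) = card {i. i < n \<and> P (Suc i)}"
    by (rule card_image) auto
  ultimately show ?thesis by auto
qed

lemma mutate_keep:
  assumes "0 \<le> p" "p \<le> 1"
  shows "measure_pmf.prob (mutate p x) {y. \<forall>i<length x. P i \<longrightarrow> y ! i = x ! i}
         = (1 - p) ^ card {i. i < length x \<and> P i}"
  using assms
proof (induction x arbitrary: P)
  case Nil
  then show ?case by simp
next
  case (Cons b bs)
  let ?E = "{y. \<forall>i<length (b#bs). P i \<longrightarrow> y ! i = (b#bs) ! i}"
  let ?F = "{y. \<forall>i<length bs. P (Suc i) \<longrightarrow> y ! i = bs ! i}"
  have pre: "\<And>h r. (h # r \<in> ?E) \<longleftrightarrow> (P 0 \<longrightarrow> h = b) \<and> r \<in> ?F"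
    by (auto simp: less_Suc_eq_0_disj)
  have "measure_pmf.prob (mutate p (b#bs)) ?E =
     measure_pmf.expectation (bernoulli_pmf p) (\<lambda>fl. measure_pmf.prob
        (map_pmf (\<lambda>r. (if fl then \<not> b else b) # r) (mutate p bs)) ?E)"
    by (simp add: prob_bind_pmf)
  also have "\<dots> = measure_pmf.expectation (bernoulli_pmf p) (\<lambda>fl.
        (if P 0 \<and> fl then 0 else 1) * measure_pmf.prob (mutate p bs) ?F)"
  proof (rule Bochner_Integration.integral_cong[OF refl])
    fix fl
    have "measure_pmf.prob (map_pmf (\<lambda>r. (if fl then \<not> b else b) # r) (mutate p bs)) ?E
       = measure_pmf.prob (mutate p bs) ((\<lambda>r. (if fl then \<not> b else b) # r) -` ?E)"
      by simp
    also have "(\<lambda>r. (if fl then \<not> b else b) # r) -` ?E = (if P 0 \<and> fl then {} else ?F)"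
      using pre by auto
    finally show "measure_pmf.prob (map_pmf (\<lambda>r. (if fl then \<not> b else b) # r) (mutate p bs)) ?E
       = (if P 0 \<and> fl then 0 else 1) * measure_pmf.prob (mutate p bs) ?F" by auto
  qed
  also have "\<dots> = (if P 0 then 1 - p else 1) * measure_pmf.prob (mutate p bs) ?F"
    using Cons.prems by auto
  also have "\<dots> = (1 - p) ^ card {i. i < length (b#bs) \<and> P i}"
    using Cons.IH[of "\<lambda>i. P (Suc i)"] Cons.prems by (simp add: card_suc_split)
  finally show ?case .
qed

lemma prob_compl_pmf: "measure_pmf.prob M (- A) = 1 - measure_pmf.prob M A"
  using measure_pmf.prob_compl[of A M] by (simp add: Compl_eq_Diff_UNIV)

lemma offspring_all:
  "measure_pmf.prob (offspring p x k) {ys. \<forall>y\<in>set ys. y \<in> Q}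
     = measure_pmf.prob (mutate p x) Q ^ k"
proof (induction k)
  case 0
  then show ?case by simp
next
  case (Suc k)
  let ?S = "{ys. \<forall>y\<in>set ys. y \<in> Q}"
  have "measure_pmf.prob (offspring p x (Suc k)) ?S
     = measure_pmf.expectation (mutate p x) (\<lambda>y. measure_pmf.prob (map_pmf (\<lambda>ys. y # ys) (offspring p x k)) ?S)"
    by (simp add: prob_bind_pmf)
  also have "\<dots> = measure_pmf.expectation (mutate p x) (\<lambda>y. indicator Q y * measure_pmf.prob (offspring p x k) ?S)"
  proof (rule Bochner_Integration.integral_cong[OF refl])
    fix y
    have "(\<lambda>ys. y # ys) -` ?S = (if y \<in> Q then ?S else {})" by auto
    then show "measure_pmf.prob (map_pmf (\<lambda>ys. y # ys) (offspring p x k)) ?S = indicator Q y * measure_pmf.prob (offspring p x k) ?S"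
      by (auto simp: indicator_def)
  qed
  also have "\<dots> = measure_pmf.prob (mutate p x) Q * measure_pmf.prob (offspring p x k) ?S"
    by simp
  finally show ?case using Suc by simp
qed

lemma mutate_length: "y \<in> set_pmf (mutate p x) \<Longrightarrow> length y = length x"
  by (induction x arbitrary: y) auto

lemma offspring_set: "ys \<in> set_pmf (offspring p x k) \<Longrightarrow> y \<in> set ys \<Longrightarrow> y \<in> set_pmf (mutate p x)"
  by (induction k arbitrary: ys) auto

lemma offspring_len: "ys \<in> set_pmf (offspring p x k) \<Longrightarrow> length ys = k"
  by (induction k arbitrary: ys) auto

lemma pow_bound: "0 \<le> (q::real) \<Longrightarrow> q \<le> 1 \<Longrightarrow> real z * (1 - q) * q ^ z \<le> 1 - q ^ z"
proof (induction z)
  case 0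
  then show ?case by simp
next
  case (Suc z)
  have a: "q ^ Suc z \<le> q ^ z" using Suc.prems by (simp add: mult_left_le_one_le)
  have "real (Suc z) * (1 - q) * q ^ Suc z = real z * (1 - q) * q ^ Suc z + (1-q) * q ^ Suc z"
    by (simp add: algebra_simps)
  also have "\<dots> \<le> real z * (1 - q) * q ^ z + (1-q) * q ^ z"
    using a Suc.prems by (intro add_mono mult_left_mono) auto
  also have "\<dots> \<le> 1 - q ^ z + (1-q) * q ^ z" using Suc by simp
  also have "\<dots> = 1 - q ^ Suc z" by (simp add: algebra_simps)
  finally show ?case .
qed

lemma select_zero:
  assumes "y \<in> set ys" "f y > v"
  shows "measure_pmf.prob (select_best f ys) {x'. f x' \<le> v} = 0"
proof -
  let ?T = "{y \<in> set ys. \<forall>z \<in> set ys. f z \<le> f y}"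
  have fin: "finite (f ` set ys)" and ne: "f ` set ys \<noteq> {}" using assms by auto
  obtain t where t: "t \<in> set ys" "f t = Max (f ` set ys)"
    using Max_in[OF fin ne] by auto
  have tT: "t \<in> ?T" using t fin by auto
  have fT: "finite ?T" by auto
  have "?T \<inter> {x'. f x' \<le> v} = {}"
  proof -
    { fix s assume "s \<in> ?T" "f s \<le> v"
      then have "f y \<le> f s" using assms(1) by auto
      with \<open>f s \<le> v\<close> assms(2) have False by simp }
    then show ?thesis by auto
  qed
  then show ?thesis
    unfolding select_best_def using tT fT
    by (subst measure_pmf_of_set) auto
qed

lemma next_bound:
  assumes "\<And>ys y. ys \<in> set_pmf M \<Longrightarrow> y \<in> set ys \<Longrightarrow> y \<in> G \<Longrightarrow> f y > v"
  shows "measure_pmf.prob (bind_pmf M (select_best f)) {x'. f x' \<le> v}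
         \<le> measure_pmf.prob M {ys. \<forall>y\<in>set ys. y \<in> - G}"
proof -
  let ?S = "{ys. \<forall>y\<in>set ys. y \<in> - G}"
  have "measure_pmf.prob (bind_pmf M (select_best f)) {x'. f x' \<le> v}
      = measure_pmf.expectation M (\<lambda>ys. measure_pmf.prob (select_best f ys) {x'. f x' \<le> v})"
    by (simp add: prob_bind_pmf)
  also have "\<dots> \<le> measure_pmf.expectation M (indicator ?S)"
  proof (rule integral_mono_AE)
    show "integrable (measure_pmf M) (\<lambda>ys. measure_pmf.prob (select_best f ys) {x'. f x' \<le> v})"
      by (rule measure_pmf.integrable_const_bound[where B=1]) auto
    show "integrable (measure_pmf M) (indicator ?S :: _ \<Rightarrow> real)"
      by (rule measure_pmf.integrable_const_bound[where B=1]) (auto simp: indicator_def)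
    show "AE ys in measure_pmf M. measure_pmf.prob (select_best f ys) {x'. f x' \<le> v} \<le> indicator ?S ys"
      unfolding AE_measure_pmf_iff
    proof (intro ballI)
      fix ys assume ys: "ys \<in> set_pmf M"
      show "measure_pmf.prob (select_best f ys) {x'. f x' \<le> v} \<le> indicator ?S ys"
      proof (cases "ys \<in> ?S")
        case True then show ?thesis by simp
      next
        case False
        then obtain y where "y \<in> set ys" "y \<in> G" by auto
        with assms[OF ys] select_zero show ?thesis by (simp add: indicator_def)
      qed
    qed
  qed
  also have "\<dots> = measure_pmf.prob M ?S" by simp
  finally show ?thesis .
qed

lemma num_bounds:
  fixes c :: real and n :: nat
  assumes c: "c > 0" and n1: "real n \<ge> 2 * c" and n2: "real n \<ge> 4 * c^2" and n0: "n > 0"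
  shows "1 - c / n \<le> exp (- (c / n))" "exp (- 2 * (c / n)) \<le> 1 - c / n"
        "exp (- c) / 2 \<le> (1 - c / n) ^ n" "exp (- 2 * c) \<le> (1 - c / n) ^ n"
proof -
  define p where "p = c / n"
  have p0: "0 \<le> p" and p1: "p \<le> 1/2" using c n1 n0 by (auto simp: p_def field_simps)
  show "1 - c / n \<le> exp (- (c / n))" using exp_ge_add_one_self[of "- (c/n)"] by simp
  have q0: "0 < 1 - p" using p1 by simp
  have ln: "- p - 2 * p^2 \<le> ln (1 - p)" by (rule ln_one_minus_pos_lower_bound[OF p0 p1])
  have "- 2 * p \<le> - p - 2 * p^2" proof -
    have "p * (2 * p) \<le> p * 1" using p0 p1 by (intro mult_left_mono) auto
    then show ?thesis by (simp add: power2_eq_square)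
  qed
  then have "exp (- 2 * p) \<le> exp (ln (1 - p))" using ln by simp
  then have e2: "exp (- 2 * p) \<le> 1 - p" using q0 by simp
  then show "exp (- 2 * (c / n)) \<le> 1 - c / n" by (simp add: p_def)
  have "exp (- 2 * p) ^ n \<le> (1 - p) ^ n" using e2 by (intro power_mono) auto
  moreover have "exp (- 2 * p) ^ n = exp (- 2 * c)"
  proof -
    have "exp (- 2 * p) ^ n = exp (real n * (- 2 * p))" by (rule exp_of_nat_mult[symmetric])
    also have "real n * (- 2 * p) = - 2 * c" using n0 by (simp add: p_def)
    finally show ?thesis .
  qed
  ultimately show "exp (- 2 * c) \<le> (1 - c / n) ^ n" by (simp add: p_def)
  have "(1 - p) ^ n = exp (real n * ln (1 - p))"
    using q0 by (simp only: exp_of_nat_mult exp_ln)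
  moreover have "real n * (- p - 2 * p^2) \<le> real n * ln (1 - p)"
    using ln by (intro mult_left_mono) auto
  moreover have "real n * (- p - 2 * p^2) = - c - 2 * c^2 / n"
    using n0 by (simp add: p_def power2_eq_square field_simps)
  moreover have "2 * c^2 / n \<le> 1/2" using n2 n0 by (simp add: field_simps)
  ultimately have "exp (- c - 1/2) \<le> (1 - p) ^ n" by simp
  moreover have "exp (- c - 1/2) = exp (- c) / exp (1/2)" by (rule exp_diff)
  moreover have half: "exp (1/2::real) \<le> 2"
  proof -
    have "exp (real 2 * (1/2)) = exp (1/2::real) ^ 2" by (rule exp_of_nat_mult)
    then have "exp (1/2::real) ^ 2 = exp 1" by simp
    then have "exp (1/2::real) ^ 2 \<le> 2 ^ 2" using exp_le by simp
    then show "exp (1/2::real) \<le> 2" by (rule power2_le_imp_le) simp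
  qed
  moreover have "exp (- c) / 2 \<le> exp (- c) / exp (1/2)"
    using half by (intro divide_left_mono) auto
  ultimately show "exp (- c) / 2 \<le> (1 - c / n) ^ n"
    unfolding p_def by linarith
qed

lemma card_split: "card {i. i < n \<and> P i} + card {i. i < n \<and> \<not> P i} = n"
proof -
  have "{i. i < n \<and> P i} \<union> {i. i < n \<and> \<not> P i} = {..<n}" by auto
  moreover have "card ({i. i < n \<and> P i} \<union> {i. i < n \<and> \<not> P i}) = card {i. i < n \<and> P i} + card {i. i < n \<and> \<not> P i}"
    by (rule card_Un_disjoint) auto
  ultimately show ?thesis by simp
qed

lemma exp_pow: "exp (a::real) ^ m = exp (real m * a)"
  by (rule exp_of_nat_mult[symmetric])

lemma main_fixed:
  fixes c lam :: real and n :: nat and x :: "bool list" and f :: "bool list \<Rightarrow> real"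
  assumes c: "c > 0" and n1: "real n \<ge> 2 * c" and n2: "real n \<ge> 4 * c^2" and n0: "n > 0"
    and len: "length x = n" and z: "zeros n x \<ge> 1" and lam: "lam \<ge> 1" and mono: "monotone_bitfun n f"
  shows "(let P = offspring (c / real n) x (num_offspring lam) in
          measure_pmf.prob P (- event_A n x) \<le> exp (- (exp (- 2 * c) / 2) * lam)
        \<and> exp (- (3 * c) * lam * real (zeros n x) / real n) \<le> measure_pmf.prob P (- event_B n x)
        \<and> measure_pmf.prob P (- event_B n x) \<le> exp (- (c / 2) * lam * real (zeros n x) / real n))
       \<and> measure_pmf.prob (next_parent c n f x lam) {x'. f x' \<le> f x}
           \<le> exp (- (1/2) * c * exp (- c) * real (num_offspring lam) * real (zeros n x) / real n)"
proof -
  define p where "p = c / real n"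
  define q where "q = 1 - p"
  define k where "k = num_offspring lam"
  define Z where "Z = zeros n x"
  define Ob where "Ob = card {i. i < n \<and> x ! i}"
  have p0: "0 \<le> p" and p1: "p \<le> 1/2" using c n1 n0 by (auto simp: p_def field_simps)
  have q0: "0 \<le> q" and q1: "q \<le> 1" using p0 p1 by (auto simp: q_def)
  note nb = num_bounds[OF c n1 n2 n0, folded p_def, folded q_def]
  have OZ: "Ob + Z = n" unfolding Ob_def Z_def zeros_def by (rule card_split)
  have rl1: "real_of_int (round lam) \<ge> lam - 1/2" by (rule of_int_round_ge)
  have rl2: "real_of_int (round lam) \<le> lam + 1/2" by (rule of_int_round_le)
  have rk: "real k = real_of_int (round lam)" using rl1 lam
    by (simp add: k_def num_offspring_def)
  have k1: "real k \<ge> lam / 2" and k2: "real k \<le> 3 / 2 * lam" using rk rl1 rl2 lam by auto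
  have Zpos: "real Z \<ge> 0" by simp
  have keepO: "measure_pmf.prob (mutate p x) {y. \<forall>i<length x. x ! i \<longrightarrow> y ! i = x ! i} = q ^ Ob"
    using mutate_keep[OF p0, of x "\<lambda>i. x ! i"] p1 by (simp add: q_def Ob_def len)
  have keepZ: "measure_pmf.prob (mutate p x) {y. \<forall>i<length x. \<not> x ! i \<longrightarrow> y ! i = x ! i} = q ^ Z"
    using mutate_keep[OF p0, of x "\<lambda>i. \<not> x ! i"] p1 by (simp add: q_def Z_def zeros_def len)
  have keepN: "measure_pmf.prob (mutate p x) {y. \<forall>i<length x. True \<longrightarrow> y ! i = x ! i} = q ^ n"
    using mutate_keep[OF p0, of x "\<lambda>i. True"] p1 by (simp add: q_def len)
  have qOn: "q ^ n \<le> q ^ Ob" using OZ q0 q1 by (intro power_decreasing) auto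
  have eA: "- event_A n x = {ys. \<forall>y\<in>set ys. y \<in> - {y. \<forall>i<length x. x ! i \<longrightarrow> y ! i = x ! i}}"
    by (auto simp: event_A_def len)
  have PA: "measure_pmf.prob (offspring p x k) (- event_A n x) = (1 - q ^ Ob) ^ k"
    unfolding eA offspring_all prob_compl_pmf keepO ..
  have A: "measure_pmf.prob (offspring p x k) (- event_A n x) \<le> exp (- (exp (- 2 * c) / 2) * lam)"
  proof -
    have "(1 - q ^ Ob) ^ k \<le> (1 - exp (- 2 * c)) ^ k"
      using qOn nb(4) q0 q1 by (intro power_mono) (auto simp: power_le_one)
    also have "\<dots> \<le> exp (- exp (- 2 * c)) ^ k"
      using exp_ge_add_one_self[of "- exp (- 2 * c)"] nb(4) q0 q1 power_le_one[OF q0 q1, of n]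
      using c by (intro power_mono) auto
    also have "\<dots> = exp (real k * (- exp (- 2 * c)))" by (rule exp_pow)
    also have "\<dots> \<le> exp (- (exp (- 2 * c) / 2) * lam)"
    proof -
      have "exp (- 2 * c) * (lam / 2) \<le> exp (- 2 * c) * real k"
        using k1 by (intro mult_left_mono) auto
      then show ?thesis by simp
    qed
    finally show ?thesis using PA by simp
  qed
  have eB: "- event_B n x = {ys. \<forall>y\<in>set ys. y \<in> {y. \<forall>i<length x. \<not> x ! i \<longrightarrow> y ! i = x ! i}}"
    by (auto simp: event_B_def len)
  have PB: "measure_pmf.prob (offspring p x k) (- event_B n x) = q ^ (Z * k)"
    unfolding eB offspring_all keepZ by (simp add: power_mult)
  have B1: "exp (- (3 * c) * lam * real Z / real n) \<le> q ^ (Z * k)"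
  proof -
    have "exp (- (3 * c) * lam * real Z / real n) \<le> exp (real (Z * k) * (- 2 * p))"
    proof -
      have "real (Z * k) * (2 * p) = 2 * c * real Z * real k / real n" by (simp add: p_def)
      also have "\<dots> \<le> 2 * c * real Z * (3/2 * lam) / real n"
        using k2 c by (intro divide_right_mono mult_left_mono) auto
      finally show ?thesis by simp
    qed
    also have "\<dots> = exp (- 2 * p) ^ (Z * k)" by (rule exp_pow[symmetric])
    also have "\<dots> \<le> q ^ (Z * k)" using nb(2) by (intro power_mono) auto
    finally show ?thesis .
  qed
  have B2: "q ^ (Z * k) \<le> exp (- (c / 2) * lam * real Z / real n)"
  proof -
    have "q ^ (Z * k) \<le> exp (- p) ^ (Z * k)" using nb(1) q0 by (intro power_mono) auto
    also have "\<dots> = exp (real (Z * k) * (- p))" by (rule exp_pow)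
    also have "\<dots> \<le> exp (- (c / 2) * lam * real Z / real n)"
    proof -
      have "c * real Z * (lam / 2) / real n \<le> c * real Z * real k / real n"
        using k1 c by (intro divide_right_mono mult_left_mono) auto
      also have "\<dots> = real (Z * k) * p" by (simp add: p_def)
      finally show ?thesis by (simp add: ac_simps)
    qed
    finally show ?thesis .
  qed
  define G where "G = {y. \<forall>i<length x. x ! i \<longrightarrow> y ! i = x ! i} - {y. \<forall>i<length x. True \<longrightarrow> y ! i = x ! i}"
  have PG: "measure_pmf.prob (mutate p x) G = q ^ Ob - q ^ n"
    unfolding G_def using keepO keepN
    by (subst measure_pmf.finite_measure_Diff) auto
  have Gimp: "f y > f x" if ys: "ys \<in> set_pmf (offspring p x k)" and y: "y \<in> set ys" and yG: "y \<in> G" for ys y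
  proof -
    have ly: "length y = n" using mutate_length[OF offspring_set[OF ys y]] len by simp
    have "y \<noteq> x" using yG by (auto simp: G_def)
    moreover have "\<forall>i<n. x ! i \<longrightarrow> y ! i" using yG len by (auto simp: G_def)
    ultimately show ?thesis using mono ly len unfolding monotone_bitfun_def by blast
  qed
  have PC0: "measure_pmf.prob (next_parent c n f x lam) {x'. f x' \<le> f x}
     \<le> measure_pmf.prob (offspring p x k) {ys. \<forall>y\<in>set ys. y \<in> - G}"
    unfolding next_parent_def p_def[symmetric] k_def[symmetric]
    by (rule next_bound) (rule Gimp)
  also have "\<dots> = (1 - (q ^ Ob - q ^ n)) ^ k"
    unfolding offspring_all prob_compl_pmf PG ..
  also have "\<dots> \<le> exp (- (1/2) * c * exp (- c) * real k * real Z / real n)"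
  proof -
    define h where "h = (1/2) * c * exp (- c) * real Z / real n"
    have qn: "q ^ n = q ^ Ob * q ^ Z" using OZ by (metis power_add)
    have "real Z * (1 - q) * q ^ Z \<le> 1 - q ^ Z" by (rule pow_bound[OF q0 q1])
    then have "q ^ Ob * (real Z * (1 - q) * q ^ Z) \<le> q ^ Ob * (1 - q ^ Z)"
      using q0 by (intro mult_left_mono) auto
    moreover have "1 - q = p" by (simp add: q_def)
    moreover have "q ^ Ob * (real Z * p * q ^ Z) = p * real Z * q ^ n" by (simp add: qn algebra_simps)
    moreover have "q ^ Ob * (1 - q ^ Z) = q ^ Ob - q ^ n" by (simp add: qn algebra_simps)
    ultimately have g1: "p * real Z * q ^ n \<le> q ^ Ob - q ^ n"
      by simp
    have "h = p * real Z * (exp (- c) / 2)" by (simp add: h_def p_def ac_simps)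
    also have "\<dots> \<le> p * real Z * q ^ n" using nb(3) p0 by (intro mult_left_mono) auto
    finally have hg: "h \<le> q ^ Ob - q ^ n" using g1 by linarith
    have "q ^ Ob \<le> 1" using q0 q1 by (simp add: power_le_one)
    have qn0: "0 \<le> q ^ n" using q0 by simp
    then have "(1 - (q ^ Ob - q ^ n)) ^ k \<le> (1 - h) ^ k"
      using hg qn0 \<open>q ^ Ob \<le> 1\<close> by (intro power_mono) linarith+
    also have "\<dots> \<le> exp (- h) ^ k"
    proof (rule power_mono)
      show "1 - h \<le> exp (- h)" using exp_ge_add_one_self[of "- h"] by simp
      show "0 \<le> 1 - h" using hg \<open>q ^ Ob \<le> 1\<close> q0 by (smt (verit) zero_le_power)
    qed
    also have "\<dots> = exp (real k * (- h))" by (rule exp_pow)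
    also have "real k * (- h) = - (1/2) * c * exp (- c) * real k * real Z / real n"
      by (simp add: h_def)
    finally show ?thesis .
  qed
  finally have C: "measure_pmf.prob (next_parent c n f x lam) {x'. f x' \<le> f x}
      \<le> exp (- (1/2) * c * exp (- c) * real k * real Z / real n)" .
  show ?thesis
    using A B1 B2 C PB unfolding Let_def p_def[symmetric] k_def[symmetric] Z_def[symmetric]
    by simp
qed

theorem mainTheorem7:
  fixes c :: real
  assumes "c > 0"
  shows "\<exists>b1 b2 b3 :: real. b1 > 0 \<and> b2 > 0 \<and> b3 > 0 \<and>
    (\<exists>N. \<forall>n \<ge> N. \<forall>(x :: bool list) (lam :: real) (f :: bool list \<Rightarrow> real).
       length x = n \<longrightarrow> zeros n x \<ge> 1 \<longrightarrow> lam \<ge> 1 \<longrightarrow> monotone_bitfun n f \<longrightarrow>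
       (let P = offspring (c / real n) x (num_offspring lam) in
          measure_pmf.prob P (- event_A n x) \<le> exp (- b1 * lam)
        \<and> exp (- b2 * lam * real (zeros n x) / real n) \<le> measure_pmf.prob P (- event_B n x)
        \<and> measure_pmf.prob P (- event_B n x) \<le> exp (- b3 * lam * real (zeros n x) / real n))
       \<and> measure_pmf.prob (next_parent c n f x lam) {x'. f x' \<le> f x}
           \<le> exp (- (1/2) * c * exp (- c) * real (num_offspring lam) * real (zeros n x) / real n))"
proof -
  have c: "c > 0" by fact
  define N where "N = nat \<lceil>4 * c^2 + 2 * c\<rceil> + 1"
  have main: "\<forall>n \<ge> N. \<forall>(x :: bool list) (lam :: real) (f :: bool list \<Rightarrow> real).
       length x = n \<longrightarrow> zeros n x \<ge> 1 \<longrightarrow> lam \<ge> 1 \<longrightarrow> monotone_bitfun n f \<longrightarrow>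
       (let P = offspring (c / real n) x (num_offspring lam) in
          measure_pmf.prob P (- event_A n x) \<le> exp (- (exp (- 2 * c) / 2) * lam)
        \<and> exp (- (3 * c) * lam * real (zeros n x) / real n) \<le> measure_pmf.prob P (- event_B n x)
        \<and> measure_pmf.prob P (- event_B n x) \<le> exp (- (c / 2) * lam * real (zeros n x) / real n))
       \<and> measure_pmf.prob (next_parent c n f x lam) {x'. f x' \<le> f x}
           \<le> exp (- (1/2) * c * exp (- c) * real (num_offspring lam) * real (zeros n x) / real n)"
  proof (intro allI impI)
    fix n :: nat and x :: "bool list" and lam :: real and f :: "bool list \<Rightarrow> real"
    assume nN: "n \<ge> N" and len: "length x = n" and z: "zeros n x \<ge> 1" and lam: "lam \<ge> 1"
      and mono: "monotone_bitfun n f"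
    have "real N \<ge> 4 * c^2 + 2 * c" unfolding N_def by linarith
    moreover have "real n \<ge> real N" using nN by simp
    ultimately have nb: "real n \<ge> 4 * c^2 + 2 * c" by linarith
    have n1: "real n \<ge> 2 * c" using nb c by (smt (verit) zero_le_power2)
    have n2: "real n \<ge> 4 * c^2" using nb c by linarith
    have n0: "n > 0" using nN by (simp add: N_def)
    show "(let P = offspring (c / real n) x (num_offspring lam) in
          measure_pmf.prob P (- event_A n x) \<le> exp (- (exp (- 2 * c) / 2) * lam)
        \<and> exp (- (3 * c) * lam * real (zeros n x) / real n) \<le> measure_pmf.prob P (- event_B n x)
        \<and> measure_pmf.prob P (- event_B n x) \<le> exp (- (c / 2) * lam * real (zeros n x) / real n))
       \<and> measure_pmf.prob (next_parent c n f x lam) {x'. f x' \<le> f x}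
           \<le> exp (- (1/2) * c * exp (- c) * real (num_offspring lam) * real (zeros n x) / real n)"
      by (rule main_fixed[OF c n1 n2 n0 len z lam mono])
  qed
  show ?thesis
    apply (rule exI[of _ "exp (- 2 * c) / 2"], rule exI[of _ "3 * c"], rule exI[of _ "c / 2"])
    using c main by auto
qed

end
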